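(* Let $r>0$ be a fixed real number. If $P$ is a finite poset having an interval representation in which every interval is closed and has length $0$ or $r$, then $\dim(P) \le 3$.
   Context: Posets are finite and reflexive. An interval representation of a poset $P$ assigns to each element $x$ a closed bounded interval $[\ell(x), r(x)]$ (possibly degenerate, of length $0$) such that for distinct $x,y$, $x<y$ in $P$ if and only if $r(x)<\ell(y)$. The dimension $\dim(P)$ is the minimum number of linear extensions of $P$ whose intersection is $P$. *)

theory Defs
  imports Complex_Main
begin

definition partial_order_on' :: "'a set \<Rightarrow> ('a \<Rightarrow> 'a \<Rightarrow> bool) \<Rightarrow> bool" where
  "partial_order_on' X le \<longleftrightarrow>
     (\<forall>x\<in>X. le x x) \<and>
     (\<forall>x\<in>X. \<forall>y\<in>X. le x y \<and> le y x \<longrightarrow> x = y) \<and>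
     (\<forall>x\<in>X. \<forall>y\<in>X. \<forall>z\<in>X. le x y \<and> le y z \<longrightarrow> le x z)"

definition finite_poset :: "'a set \<Rightarrow> ('a \<Rightarrow> 'a \<Rightarrow> bool) \<Rightarrow> bool" where
  "finite_poset X le \<longleftrightarrow> finite X \<and> partial_order_on' X le"

definition linear_extension :: "'a set \<Rightarrow> ('a \<Rightarrow> 'a \<Rightarrow> bool) \<Rightarrow> ('a \<Rightarrow> 'a \<Rightarrow> bool) \<Rightarrow> bool" where
  "linear_extension X le L \<longleftrightarrow>
     partial_order_on' X L \<and>
     (\<forall>x\<in>X. \<forall>y\<in>X. L x y \<or> L y x) \<and>
     (\<forall>x\<in>X. \<forall>y\<in>X. le x y \<longrightarrow> L x y)"

definition realizer :: "'a set \<Rightarrow> ('a \<Rightarrow> 'a \<Rightarrow> bool) \<Rightarrow> ('a \<Rightarrow> 'a \<Rightarrow> bool) set \<Rightarrow> bool" where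
  "realizer X le R \<longleftrightarrow>
     R \<noteq> {} \<and> (\<forall>L\<in>R. linear_extension X le L) \<and>
     (\<forall>x\<in>X. \<forall>y\<in>X. le x y \<longleftrightarrow> (\<forall>L\<in>R. L x y))"

definition poset_dim :: "'a set \<Rightarrow> ('a \<Rightarrow> 'a \<Rightarrow> bool) \<Rightarrow> nat" where
  "poset_dim X le = (LEAST n. \<exists>R. finite R \<and> card R = n \<and> realizer X le R)"

definition interval_representation ::
  "'a set \<Rightarrow> ('a \<Rightarrow> 'a \<Rightarrow> bool) \<Rightarrow> ('a \<Rightarrow> real) \<Rightarrow> ('a \<Rightarrow> real) \<Rightarrow> bool" where
  "interval_representation X le lft rgt \<longleftrightarrow>
     (\<forall>x\<in>X. lft x \<le> rgt x) \<and>
     (\<forall>x\<in>X. \<forall>y\<in>X. x \<noteq> y \<longrightarrow> (le x y \<longleftrightarrow> rgt x < lft y))"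

end

theory Submission
  imports Defs "HOL-Library.Product_Lexorder"
begin

lemma key_ext:
  fixes K :: "'a \<Rightarrow> 'b::linorder"
  assumes "inj_on K X" "\<forall>x\<in>X. \<forall>y\<in>X. x \<noteq> y \<and> le x y \<longrightarrow> K x < K y"
  shows "linear_extension X le (\<lambda>x y. K x \<le> K y)"
  unfolding linear_extension_def partial_order_on'_def
proof (intro conjI ballI impI)
  fix x y assume "x \<in> X" "y \<in> X" "le x y"
  thus "K x \<le> K y" using assms(2) by (cases "x = y") (auto intro: less_imp_le)
qed (use assms in \<open>auto simp: inj_on_def intro: order_trans\<close>)

lemma fst_less: "fst (a::('b::linorder) \<times> ('c::linorder)) < fst b \<Longrightarrow> a < b"
  by (cases a, cases b) simp

theorem mainTheorem7:
  fixes X :: "'a set" and le :: "'a \<Rightarrow> 'a \<Rightarrow> bool"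
    and \<rho> :: real and lft rgt :: "'a \<Rightarrow> real"
  assumes "\<rho> > 0"
    and "finite_poset X le"
    and "interval_representation X le lft rgt"
    and "\<forall>x\<in>X. rgt x - lft x = 0 \<or> rgt x - lft x = \<rho>"
  shows "poset_dim X le \<le> 3"
proof -
  note rho = assms(1)
  have fin: "finite X" and po: "partial_order_on' X le"
    using assms(2) unfolding finite_poset_def by auto
  have refl: "\<forall>x\<in>X. le x x" using po unfolding partial_order_on'_def by auto
  have lr: "\<forall>x\<in>X. lft x \<le> rgt x"
    and rep: "\<forall>x\<in>X. \<forall>y\<in>X. x \<noteq> y \<longrightarrow> (le x y \<longleftrightarrow> rgt x < lft y)"
    using assms(3) unfolding interval_representation_def by auto
  obtain h :: "'a \<Rightarrow> nat" where inj: "inj_on h X"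
    using finite_imp_inj_to_nat_seg[OF fin] by blast
  define u where "u x \<longleftrightarrow> rgt x - lft x = \<rho>" for x
  have pt: "\<And>x. x \<in> X \<Longrightarrow> \<not> u x \<Longrightarrow> rgt x = lft x" using assms(4) u_def by force
  have un: "\<And>x. u x \<Longrightarrow> rgt x = lft x + \<rho>" using u_def by auto
  define c where "c x = \<lfloor>lft x / \<rho>\<rfloor>" for x
  have c1: "real_of_int (c x) * \<rho> \<le> lft x" for x
  proof -
    have "real_of_int (c x) \<le> lft x / \<rho>" unfolding c_def by linarith
    thus ?thesis using rho by (simp add: pos_le_divide_eq)
  qed
  have c2: "lft x < (real_of_int (c x) + 1) * \<rho>" for x
  proof -
    have "lft x / \<rho> < real_of_int (c x) + 1" unfolding c_def by linarith
    thus ?thesis using rho by (simp add: pos_divide_less_eq)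
  qed
  define K1 where "K1 x = (if u x then (real_of_int (c x) + 1) * \<rho> else lft x, - lft x, - real (h x))" for x
  define K2 where "K2 x = (if u x then (if even (c x) then rgt x else lft x) else lft x,
       if u x then (if even (c x) then 2 else 0) else (1::real), real (h x))" for x
  define K3 where "K3 x = (if u x then (if even (c x) then lft x else rgt x) else lft x,
       if u x then (if even (c x) then 0 else 2) else (1::real), - real (h x))" for x
  have i1: "inj_on K1 X" using inj unfolding inj_on_def K1_def by auto
  have i2: "inj_on K2 X" using inj unfolding inj_on_def K2_def by auto
  have i3: "inj_on K3 X" using inj unfolding inj_on_def K3_def by auto
  have b1: "lft x \<le> fst (K1 x) \<and> fst (K1 x) \<le> rgt x" if "x \<in> X" for x
    using c1[of x] c2[of x] un[of x] pt[OF that] unfolding K1_def by (auto simp: algebra_simps)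
  have b2: "lft x \<le> fst (K2 x) \<and> fst (K2 x) \<le> rgt x" if "x \<in> X" for x
    using lr that unfolding K2_def by auto
  have b3: "lft x \<le> fst (K3 x) \<and> fst (K3 x) \<le> rgt x" if "x \<in> X" for x
    using lr that unfolding K3_def by auto
  have ext: "\<forall>x\<in>X. \<forall>y\<in>X. x \<noteq> y \<and> le x y \<longrightarrow> K x < K y"
    if "\<And>x. x \<in> X \<Longrightarrow> lft x \<le> fst (K x) \<and> fst (K x) \<le> rgt x"
    for K :: "'a \<Rightarrow> real \<times> real \<times> real"
  proof (intro ballI impI)
    fix x y assume xy: "x \<in> X" "y \<in> X" "x \<noteq> y \<and> le x y"
    hence "rgt x < lft y" using rep by auto
    hence "fst (K x) < fst (K y)" using that[OF xy(1)] that[OF xy(2)] by linarith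
    thus "K x < K y" by (rule fst_less)
  qed
  have e1: "linear_extension X le (\<lambda>x y. K1 x \<le> K1 y)" by (rule key_ext[OF i1 ext[OF b1]])
  have e2: "linear_extension X le (\<lambda>x y. K2 x \<le> K2 y)" by (rule key_ext[OF i2 ext[OF b2]])
  have e3: "linear_extension X le (\<lambda>x y. K3 x \<le> K3 y)" by (rule key_ext[OF i3 ext[OF b3]])
  have inc: "K1 y < K1 x \<or> K2 y < K2 x \<or> K3 y < K3 x"
    if xy: "x \<in> X" "y \<in> X" "x \<noteq> y" "lft y \<le> rgt x" "lft x \<le> rgt y" for x y
  proof (cases "u x")
    case ux: True
    show ?thesis
    proof (cases "u y")
      case uy: True
      show ?thesis
      proof (cases "c x = c y")
        case True
        have hne: "h x \<noteq> h y" using inj xy unfolding inj_on_def by auto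
        consider "lft y < lft x" | "lft x < lft y" | "lft x = lft y \<and> h y < h x" | "lft x = lft y \<and> h x < h y"
          using hne by linarith
        thus ?thesis
        proof cases
          case 1 thus ?thesis using True ux uy un[OF ux] un[OF uy] unfolding K2_def by auto
        next
          case 2 thus ?thesis using True ux uy unfolding K1_def by auto
        next
          case 3 thus ?thesis using True ux uy un[OF ux] un[OF uy] unfolding K2_def by auto
        next
          case 4 thus ?thesis using True ux uy unfolding K1_def by auto
        qed
      next
        case False
        have a: "lft x / \<rho> \<le> lft y / \<rho> + 1" using xy(5) un[OF uy] rho
          by (simp add: divide_simps)
        have b: "lft y / \<rho> \<le> lft x / \<rho> + 1" using xy(4) un[OF ux] rho
          by (simp add: divide_simps)
        have "c x \<le> c y + 1" unfolding c_def using a by linarith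
        moreover have "c y \<le> c x + 1" unfolding c_def using b by linarith
        ultimately have "even (c x) \<noteq> even (c y)" using False
          by (smt (verit, ccfv_threshold) even_add odd_one)
        thus ?thesis using ux uy xy(4) unfolding K2_def K3_def by auto
      qed
    next
      case uy: False
      thus ?thesis using ux xy(4) xy(5) pt[OF xy(2) uy] unfolding K2_def K3_def by auto
    qed
  next
    case ux: False
    show ?thesis
    proof (cases "u y")
      case uy: True
      thus ?thesis using ux xy(4) xy(5) pt[OF xy(1) ux] unfolding K2_def K3_def by auto
    next
      case uy: False
      have "lft x = lft y" using xy pt[OF xy(1) ux] pt[OF xy(2) uy] by auto
      moreover have "h x \<noteq> h y" using inj xy unfolding inj_on_def by auto
      ultimately show ?thesis using ux uy unfolding K2_def K3_def by auto
    qed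
  qed
  define R where "R = {(\<lambda>x y. K1 x \<le> K1 y), (\<lambda>x y. K2 x \<le> K2 y), (\<lambda>x y. K3 x \<le> K3 y)}"
  have "realizer X le R"
    unfolding realizer_def
  proof (intro conjI ballI)
    show "R \<noteq> {}" unfolding R_def by auto
  next
    fix L assume "L \<in> R" thus "linear_extension X le L" using e1 e2 e3 unfolding R_def by auto
  next
    fix x y assume xy: "x \<in> X" "y \<in> X"
    show "le x y \<longleftrightarrow> (\<forall>L\<in>R. L x y)"
    proof
      assume "le x y" thus "\<forall>L\<in>R. L x y" using e1 e2 e3 xy unfolding R_def linear_extension_def by auto
    next
      assume all: "\<forall>L\<in>R. L x y"
      hence a1: "K1 x \<le> K1 y" and a2: "K2 x \<le> K2 y" and a3: "K3 x \<le> K3 y" unfolding R_def by auto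
      show "le x y"
      proof (rule ccontr)
        assume nle: "\<not> le x y"
        hence ne: "x \<noteq> y" using refl xy by auto
        have "\<not> rgt x < lft y" using rep xy ne nle by auto
        show False
        proof (cases "rgt y < lft x")
          case True
          hence "le y x" using rep xy ne by auto
          hence "K1 y < K1 x" using ext[OF b1] xy ne by auto
          thus False using a1 by auto
        next
          case False
          thus False using inc[OF xy ne] \<open>\<not> rgt x < lft y\<close> a1 a2 a3 by auto
        qed
      qed
    qed
  qed
  moreover have "finite R" "card R \<le> 3" unfolding R_def by (auto simp: card_insert_if)
  ultimately have "\<exists>R. finite R \<and> card R = card R \<and> realizer X le R" by blast
  have "poset_dim X le \<le> card R"
    unfolding poset_dim_def using \<open>realizer X le R\<close> \<open>finite R\<close> by (intro Least_le) blast
  thus ?thesis using \<open>card R \<le> 3\<close> by linarith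
qed

end
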